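(* Let $U\subset\mathbb{R}^n$ be a bounded domain with smooth boundary and let $(u_1,u_2)\in C(\overline U)^2$ be a viscosity solution of the system (S) in $U$. Then for every $y\in U$ and $i\in\{1,2\}$, the limits $S_i^+(y)=\lim_{r\to0^+}S_i^+(y,r)$ and $S_i^-(y)=\lim_{r\to0^+}S_i^-(y,r)$ exist and satisfy $S_i^+(y)=-S_i^-(y)$.
   Context: For $\varphi\in C^2$ near $x$, set $\Delta_\infty\varphi(x)=|D\varphi(x)|^{-2}\sum_{k,l=1}^n\varphi_{x_k}\varphi_{x_l}\varphi_{x_kx_l}(x)$ when $D\varphi(x)\neq0$. Define $\Delta_\infty^+\varphi(x)=\Delta_\infty\varphi(x)$ if $D\varphi(x)\ne0$ and $\Delta_\infty^+\varphi(x)=\max\{D^2\varphi(x)v\cdot v: v\in\mathbb{S}^{n-1}\}$ if $D\varphi(x)=0$; define $\Delta_\infty^-\varphi(x)$ in the same way with $\min$ in place of $\max$. The system (S) on an open set $\Omega$ is: $-\Delta_\infty u_1+u_1-u_2=0$ and $-\Delta_\infty u_2+u_2-u_1=0$ in $\Omega$. A pair $(u_1,u_2)$ of upper semicontinuous functions on $\Omega$ is a viscosity subsolution of (S) in $\Omega$ if for each $i\in\{1,2\}$, $j=3-i$, and each $\varphi\in C^2(\Omega)$ such that $u_i-\varphi$ has a local maximum at $x_0\in\Omega$, one has $-\Delta_\infty^+\varphi(x_0)+u_i(x_0)-u_j(x_0)\le0$. A pair of lower semicontinuous functions on $\Omega$ is a viscosity supersolution if for each $i$, $j=3-i$, and each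 $\varphi\in C^2(\Omega)$ such that $u_i-\varphi$ has a local minimum at $x_0\in\Omega$, one has $-\Delta_\infty^-\varphi(x_0)+u_i(x_0)-u_j(x_0)\ge0$. A viscosity solution is a pair that is both a subsolution and a supersolution. For $y\in U$, $r>0$ with $\overline B(y,r)\subset U$: $S_i^+(y,r)=\frac{\max_{|z-y|=r}u_i(z)-u_i(y)}{r}$ and $S_i^-(y,r)=\frac{\min_{|z-y|=r}u_i(z)-u_i(y)}{r}$. *)

theory Defs
  imports "HOL-Analysis.Analysis"
begin

fun Ck_on :: "nat \<Rightarrow> 'a::euclidean_space set \<Rightarrow> ('a \<Rightarrow> real) \<Rightarrow> bool" where
  "Ck_on 0 S f = continuous_on S f"
| "Ck_on (Suc k) S f =
     (f differentiable_on S \<and> (\<forall>v. Ck_on k S (\<lambda>x. frechet_derivative f (at x) v)))"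

definition smooth_on :: "'a::euclidean_space set \<Rightarrow> ('a \<Rightarrow> real) \<Rightarrow> bool" where
  "smooth_on S f \<longleftrightarrow> (\<forall>k. Ck_on k S f)"

definition grad :: "('a::euclidean_space \<Rightarrow> real) \<Rightarrow> 'a \<Rightarrow> 'a" where
  "grad f x = (\<Sum>b\<in>Basis. frechet_derivative f (at x) b *\<^sub>R b)"

definition hessq :: "('a::euclidean_space \<Rightarrow> real) \<Rightarrow> 'a \<Rightarrow> 'a \<Rightarrow> real" where
  "hessq f x v = frechet_derivative (\<lambda>y. frechet_derivative f (at y) v) (at x) v"

definition inf_lap :: "('a::euclidean_space \<Rightarrow> real) \<Rightarrow> 'a \<Rightarrow> real" where
  "inf_lap f x = hessq f x (grad f x) / (norm (grad f x))\<^sup>2"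

definition inf_lap_plus :: "('a::euclidean_space \<Rightarrow> real) \<Rightarrow> 'a \<Rightarrow> real" where
  "inf_lap_plus f x =
     (if grad f x \<noteq> 0 then inf_lap f x else (SUP v\<in>sphere 0 1. hessq f x v))"

definition inf_lap_minus :: "('a::euclidean_space \<Rightarrow> real) \<Rightarrow> 'a \<Rightarrow> real" where
  "inf_lap_minus f x =
     (if grad f x \<noteq> 0 then inf_lap f x else (INF v\<in>sphere 0 1. hessq f x v))"

definition usc_on :: "'a::metric_space set \<Rightarrow> ('a \<Rightarrow> real) \<Rightarrow> bool" where
  "usc_on S u \<longleftrightarrow> (\<forall>x\<in>S. \<forall>a. u x < a \<longrightarrow> (\<exists>e>0. \<forall>y\<in>S. dist y x < e \<longrightarrow> u y < a))"

definition lsc_on :: "'a::metric_space set \<Rightarrow> ('a \<Rightarrow> real) \<Rightarrow> bool" where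
  "lsc_on S u \<longleftrightarrow> (\<forall>x\<in>S. \<forall>a. a < u x \<longrightarrow> (\<exists>e>0. \<forall>y\<in>S. dist y x < e \<longrightarrow> a < u y))"

definition local_max_on :: "'a::metric_space set \<Rightarrow> ('a \<Rightarrow> real) \<Rightarrow> 'a \<Rightarrow> bool" where
  "local_max_on S g x0 \<longleftrightarrow> x0 \<in> S \<and> (\<exists>e>0. \<forall>x\<in>S. dist x x0 < e \<longrightarrow> g x \<le> g x0)"

definition local_min_on :: "'a::metric_space set \<Rightarrow> ('a \<Rightarrow> real) \<Rightarrow> 'a \<Rightarrow> bool" where
  "local_min_on S g x0 \<longleftrightarrow> x0 \<in> S \<and> (\<exists>e>0. \<forall>x\<in>S. dist x x0 < e \<longrightarrow> g x0 \<le> g x)"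

definition visc_sub_comp :: "'a::euclidean_space set \<Rightarrow> ('a \<Rightarrow> real) \<Rightarrow> ('a \<Rightarrow> real) \<Rightarrow> bool" where
  "visc_sub_comp \<Omega> ui uj \<longleftrightarrow>
     (\<forall>\<phi> x0. Ck_on 2 \<Omega> \<phi> \<longrightarrow> local_max_on \<Omega> (\<lambda>x. ui x - \<phi> x) x0 \<longrightarrow>
        - inf_lap_plus \<phi> x0 + ui x0 - uj x0 \<le> 0)"

definition visc_super_comp :: "'a::euclidean_space set \<Rightarrow> ('a \<Rightarrow> real) \<Rightarrow> ('a \<Rightarrow> real) \<Rightarrow> bool" where
  "visc_super_comp \<Omega> ui uj \<longleftrightarrow>
     (\<forall>\<phi> x0. Ck_on 2 \<Omega> \<phi> \<longrightarrow> local_min_on \<Omega> (\<lambda>x. ui x - \<phi> x) x0 \<longrightarrow>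
        - inf_lap_minus \<phi> x0 + ui x0 - uj x0 \<ge> 0)"

definition visc_subsolution :: "'a::euclidean_space set \<Rightarrow> ('a \<Rightarrow> real) \<Rightarrow> ('a \<Rightarrow> real) \<Rightarrow> bool" where
  "visc_subsolution \<Omega> u1 u2 \<longleftrightarrow> usc_on \<Omega> u1 \<and> usc_on \<Omega> u2 \<and>
     visc_sub_comp \<Omega> u1 u2 \<and> visc_sub_comp \<Omega> u2 u1"

definition visc_supersolution :: "'a::euclidean_space set \<Rightarrow> ('a \<Rightarrow> real) \<Rightarrow> ('a \<Rightarrow> real) \<Rightarrow> bool" where
  "visc_supersolution \<Omega> u1 u2 \<longleftrightarrow> lsc_on \<Omega> u1 \<and> lsc_on \<Omega> u2 \<and>
     visc_super_comp \<Omega> u1 u2 \<and> visc_super_comp \<Omega> u2 u1"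

definition visc_solution :: "'a::euclidean_space set \<Rightarrow> ('a \<Rightarrow> real) \<Rightarrow> ('a \<Rightarrow> real) \<Rightarrow> bool" where
  "visc_solution \<Omega> u1 u2 \<longleftrightarrow> visc_subsolution \<Omega> u1 u2 \<and> visc_supersolution \<Omega> u1 u2"

definition smooth_boundary :: "'a::euclidean_space set \<Rightarrow> bool" where
  "smooth_boundary U \<longleftrightarrow> (\<forall>p\<in>frontier U. \<exists>V \<psi>. open V \<and> p \<in> V \<and> smooth_on V \<psi> \<and>
      (\<forall>x\<in>V. grad \<psi> x \<noteq> 0) \<and> U \<inter> V = {x\<in>V. \<psi> x < 0})"

definition S_plus :: "('a::euclidean_space \<Rightarrow> real) \<Rightarrow> 'a \<Rightarrow> real \<Rightarrow> real" where
  "S_plus u y r = ((SUP z\<in>sphere y r. u z) - u y) / r"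

definition S_minus :: "('a::euclidean_space \<Rightarrow> real) \<Rightarrow> 'a \<Rightarrow> real \<Rightarrow> real" where
  "S_minus u y r = ((INF z\<in>sphere y r. u z) - u y) / r"

end

theory Submission
  imports Defs
begin


definition fam :: "real \<Rightarrow> real \<Rightarrow> real \<Rightarrow> real \<Rightarrow> 'a::euclidean_space \<Rightarrow> 'a \<Rightarrow> real" where
  "fam a b k e z x = a + b * sqrt ((x-z)\<bullet>(x-z) + e) - k * ((x-z)\<bullet>(x-z))"

definition cf :: "real \<Rightarrow> real \<Rightarrow> real \<Rightarrow> 'a::euclidean_space \<Rightarrow> 'a \<Rightarrow> real" where
  "cf b k e z x = b / sqrt ((x-z)\<bullet>(x-z) + e) - 2*k"

definition df :: "real \<Rightarrow> real \<Rightarrow> 'a::euclidean_space \<Rightarrow> 'a \<Rightarrow> real" where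
  "df b e z x = - b / (sqrt ((x-z)\<bullet>(x-z) + e))^3"

lemma aux_fam0: True by simp
lemma aux_s: "2*(p::real)*(inverse s/2) = p/s"
  by (metis divide_inverse mult.assoc mult.commute nonzero_mult_div_cancel_left zero_neq_numeral times_divide_eq_right)
lemma aux_fam: "0 + (b::real) * (p/s) - k*(2*p) + 0 = (b/s - 2*k)*p"
  by (simp add: algebra_simps)

lemma qpos: "e > 0 \<Longrightarrow> (x-z)\<bullet>(x-(z::'a::real_inner)) + e > 0"
  by (smt (verit) inner_ge_zero)
lemma dq_deriv: "((\<lambda>x. (x-z)\<bullet>(x-z) + e) has_derivative (\<lambda>w. 2*((x-z)\<bullet>w))) (at (x::'a::euclidean_space))"
  apply (rule derivative_eq_intros refl)+
  apply (simp add: inner_commute fun_eq_iff)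
  done
lemma ds_deriv: assumes "e > 0"
  shows "((\<lambda>x. sqrt ((x-z)\<bullet>(x-z) + e)) has_derivative (\<lambda>w. ((x-z)\<bullet>w) / sqrt ((x-z)\<bullet>(x-z) + e))) (at (x::'a::euclidean_space))"
proof -
  have q: "(x-z)\<bullet>(x-z) + e > 0" by (rule qpos[OF assms])
  show ?thesis
    using has_derivative_real_sqrt[where g="\<lambda>x. (x-z)\<bullet>(x-z)+e", OF q dq_deriv] unfolding aux_s .
qed

lemma fam_deriv:
  assumes "e > 0"
  shows "(fam a b k e z has_derivative (\<lambda>v. cf b k e z x * ((x-z)\<bullet>v))) (at (x::'a::euclidean_space))"
proof -
  have "((\<lambda>x. a + b * sqrt ((x-z)\<bullet>(x-z) + e) - k * ((x-z)\<bullet>(x-z) + e) + k * e) has_derivative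
     (\<lambda>w. 0 + b * (((x-z)\<bullet>w) / sqrt ((x-z)\<bullet>(x-z) + e)) - k * (2*((x-z)\<bullet>w)) + 0)) (at x)"
    by (intro has_derivative_diff has_derivative_add has_derivative_const has_derivative_mult_right ds_deriv[OF assms] dq_deriv)
  moreover have "(\<lambda>x. a + b * sqrt ((x-z)\<bullet>(x-z) + e) - k * ((x-z)\<bullet>(x-z) + e) + k * e) = fam a b k e z"
    by (simp add: fun_eq_iff fam_def algebra_simps)
  moreover have "(\<lambda>w. 0 + b * (((x-z)\<bullet>w) / sqrt ((x-z)\<bullet>(x-z) + e)) - k * (2*((x-z)\<bullet>w)) + 0)
     = (\<lambda>v. cf b k e z x * ((x-z)\<bullet>v))"
    unfolding cf_def by (simp only: aux_fam)
  ultimately show ?thesis by simp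
qed

lemma aux_cf: "(s::real) \<noteq> 0 \<Longrightarrow> - b * (inverse s * (pw / s) * inverse s) = (- b / s^3) * pw"
  by (simp add: field_simps power3_eq_cube)

lemma cf_deriv:
  assumes "e > 0"
  shows "((\<lambda>x. cf b k e z x * ((x-z)\<bullet>v)) has_derivative
     (\<lambda>w. df b e z x * ((x-z)\<bullet>w) * ((x-z)\<bullet>v) + cf b k e z x * (w\<bullet>v))) (at (x::'a::euclidean_space))"
proof -
  have q: "(x-z)\<bullet>(x-z) + e > 0" by (rule qpos[OF assms])
  have s0: "sqrt ((x-z)\<bullet>(x-z) + e) \<noteq> 0" using q by simp
  have dg: "((\<lambda>x. (x-z)\<bullet>v) has_derivative (\<lambda>w. w\<bullet>v)) (at x)"
    apply (rule derivative_eq_intros refl)+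
    apply (simp add: fun_eq_iff)
    done
  have dF: "((\<lambda>x. b / sqrt ((x-z)\<bullet>(x-z) + e) - 2*k) has_derivative
     (\<lambda>h. (- b * (inverse (sqrt ((x-z)\<bullet>(x-z) + e)) * (((x-z)\<bullet>h) / sqrt ((x-z)\<bullet>(x-z) + e)) * inverse (sqrt ((x-z)\<bullet>(x-z) + e))) + 0 / sqrt ((x-z)\<bullet>(x-z) + e)) - 0)) (at x)"
    by (intro has_derivative_diff has_derivative_divide has_derivative_const ds_deriv[OF assms] s0)
  have "((\<lambda>x. (b / sqrt ((x-z)\<bullet>(x-z) + e) - 2*k) * ((x-z)\<bullet>v)) has_derivative
     (\<lambda>h. (b / sqrt ((x-z)\<bullet>(x-z) + e) - 2*k) * (h\<bullet>v) + (- b * (inverse (sqrt ((x-z)\<bullet>(x-z) + e)) * (((x-z)\<bullet>h) / sqrt ((x-z)\<bullet>(x-z) + e)) * inverse (sqrt ((x-z)\<bullet>(x-z) + e))) + 0 / sqrt ((x-z)\<bullet>(x-z) + e) - 0) * ((x-z)\<bullet>v))) (at x)"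
    by (rule has_derivative_mult[OF dF dg])
  then show ?thesis unfolding cf_def df_def aux_cf[OF s0] 
    by (simp add: algebra_simps)
qed

lemma fd_fam: "e > 0 \<Longrightarrow> frechet_derivative (fam a b k e z) (at x) = (\<lambda>v. cf b k e z x * ((x-z)\<bullet>v))"
  by (rule sym, rule frechet_derivative_at, rule fam_deriv)

lemma fd_fam_fun: assumes "e > 0" shows " (\<lambda>x. frechet_derivative (fam a b k e z) (at x) v) = (\<lambda>x. cf b k e z (x::'a::euclidean_space) * ((x-z)\<bullet>v))"
proof (rule ext)
  fix x
  show "frechet_derivative (fam a b k e z) (at x) v = cf b k e z x * ((x-z)\<bullet>v)"
    using fd_fam[OF assms, of a b k z x] by simp
qed

lemma fd_cf: "e > 0 \<Longrightarrow> frechet_derivative (\<lambda>x. cf b k e z x * ((x-z)\<bullet>v)) (at (x::'a::euclidean_space)) = 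
   (\<lambda>w. df b e z x * ((x-z)\<bullet>w) * ((x-z)\<bullet>v) + cf b k e z x * (w\<bullet>v))"
  by (rule sym, rule frechet_derivative_at, rule cf_deriv)

lemma hessq_fam: "e > 0 \<Longrightarrow> hessq (fam a b k e z) x v = df b e z x * ((x-z)\<bullet>v) * ((x-z)\<bullet>v) + cf b k e z x * (v\<bullet>v)"
  unfolding hessq_def fd_fam_fun fd_cf by simp

lemma grad_fam: "e > 0 \<Longrightarrow> grad (fam a b k e z) x = cf b k e z x *\<^sub>R (x-z)"
proof -
  assume e: "e > 0"
  have "grad (fam a b k e z) x = (\<Sum>i\<in>Basis. (cf b k e z x * ((x-z)\<bullet>i)) *\<^sub>R i)"
    unfolding grad_def fd_fam[OF e] ..
  also have "\<dots> = cf b k e z x *\<^sub>R (\<Sum>i\<in>Basis. ((x-z)\<bullet>i) *\<^sub>R i)"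
    by (simp add: scaleR_sum_right)
  also have "\<dots> = cf b k e z x *\<^sub>R (x-z)" by (simp add: euclidean_representation)
  finally show ?thesis .
qed

lemma qne: "e > 0 \<Longrightarrow> (x-z)\<bullet>(x-z) + e \<noteq> 0" for x z :: "'a::real_inner"
  using qpos[of e x z] by simp

lemma cont_cf: "e > 0 \<Longrightarrow> continuous_on S (cf b k e z)"
  unfolding cf_def by (intro continuous_intros) (simp_all add: qne)

lemma cont_df: "e > 0 \<Longrightarrow> continuous_on S (df b e z)"
  unfolding df_def by (intro continuous_intros) (simp_all add: qne)

lemma Ck2_fam: "e > 0 \<Longrightarrow> Ck_on 2 S (fam a b k e (z::'a::euclidean_space))"
proof -
  assume e: "e > 0"
  have "Ck_on (Suc (Suc 0)) S (fam a b k e z)"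
  proof (simp only: Ck_on.simps, intro conjI allI)
    show "fam a b k e z differentiable_on S"
      by (intro differentiable_at_imp_differentiable_on ballI) (rule differentiableI, rule fam_deriv[OF e])
    fix v
    show "(\<lambda>x. frechet_derivative (fam a b k e z) (at x) v) differentiable_on S"
      unfolding fd_fam_fun[OF e]
      by (intro differentiable_at_imp_differentiable_on ballI) (rule differentiableI, rule cf_deriv[OF e])
    fix w
    show "continuous_on S (\<lambda>x. frechet_derivative (\<lambda>x. frechet_derivative (fam a b k e z) (at x) v) (at x) w)"
      unfolding fd_fam_fun[OF e] fd_cf[OF e]
    proof -
      have ci: "continuous_on S (\<lambda>x. (x - z) \<bullet> u)" for u
        by (intro continuous_on_inner continuous_on_diff continuous_on_id continuous_on_const)
      show "continuous_on S (\<lambda>x. df b e z x * ((x - z) \<bullet> w) * ((x - z) \<bullet> v) + cf b k e z x * (w \<bullet> v))"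
        by (intro continuous_on_add continuous_on_mult ci cont_cf[OF e] cont_df[OF e] continuous_on_const)
    qed
  qed
  then show ?thesis by (simp only: numeral_2_eq_2)
qed

lemma sphere01_ne: "sphere (0::'a::euclidean_space) 1 \<noteq> {}"
  by simp

lemma hess_ratio: "(c::real) \<noteq> 0 \<Longrightarrow> q \<noteq> 0 \<Longrightarrow>
   (d * (c*q) * (c*q) + c * (c*(c*q))) / (c*(c*q)) = d * q + c"
  by (simp add: field_simps power2_eq_square)

lemma ilap_fam:
  assumes e: "e > 0" and h: "x = z \<or> cf b k e z x \<noteq> 0"
  shows "inf_lap_plus (fam a b k e z) x = df b e z x * ((x-z)\<bullet>(x-z)) + cf b k e z x"
    and "inf_lap_minus (fam a b k e z) x = df b e z x * ((x-z)\<bullet>(x-z)) + cf b k e z x"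
proof -
  have "inf_lap_plus (fam a b k e z) x = df b e z x * ((x-z)\<bullet>(x-z)) + cf b k e z x \<and>
        inf_lap_minus (fam a b k e z) x = df b e z x * ((x-z)\<bullet>(x-z)) + cf b k e z x"
  proof (cases "x = z")
    case True
    have g: "grad (fam a b k e z) x = 0" using grad_fam[OF e, of a b k z x] True by simp
    have hs: "hessq (fam a b k e z) x v = cf b k e z x" if "v \<in> sphere 0 1" for v
    proof -
      have "norm v = 1" using that by simp
      then have "v\<bullet>v = 1" by (simp add: power2_norm_eq_inner[symmetric])
      then show ?thesis using True by (simp add: hessq_fam[OF e])
    qed
    have "(SUP v\<in>sphere 0 1. hessq (fam a b k e z) x v) = (SUP v\<in>sphere (0::'a) 1. cf b k e z x)"
      by (rule SUP_cong) (auto simp: hs)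
    also have "\<dots> = cf b k e z x" by (rule cSUP_const[OF sphere01_ne])
    finally have 1: "(SUP v\<in>sphere 0 1. hessq (fam a b k e z) x v) = cf b k e z x" .
    have "(INF v\<in>sphere 0 1. hessq (fam a b k e z) x v) = (INF v\<in>sphere (0::'a) 1. cf b k e z x)"
      by (rule INF_cong) (auto simp: hs)
    also have "\<dots> = cf b k e z x" by (rule cINF_const[OF sphere01_ne])
    finally have 2: "(INF v\<in>sphere 0 1. hessq (fam a b k e z) x v) = cf b k e z x" .
    show ?thesis unfolding inf_lap_plus_def inf_lap_minus_def g using 1 2 True by simp
  next
    case False
    then have c: "cf b k e z x \<noteq> 0" using h by simp
    have q: "(x-z)\<bullet>(x-z) \<noteq> 0" using False by simp
    have g: "grad (fam a b k e z) x \<noteq> 0" using grad_fam[OF e, of a b k z x] c False by simp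
    have "inf_lap (fam a b k e z) x = df b e z x * ((x-z)\<bullet>(x-z)) + cf b k e z x"
      unfolding inf_lap_def grad_fam[OF e] hessq_fam[OF e] power2_norm_eq_inner
      using hess_ratio[OF c q, of "df b e z x"]
      by (simp add: inner_scaleR_right inner_scaleR_left inner_commute)
    then show ?thesis unfolding inf_lap_plus_def inf_lap_minus_def using g by simp
  qed
  then show "inf_lap_plus (fam a b k e z) x = df b e z x * ((x-z)\<bullet>(x-z)) + cf b k e z x"
    and "inf_lap_minus (fam a b k e z) x = df b e z x * ((x-z)\<bullet>(x-z)) + cf b k e z x" by auto
qed



lemma A1: "(d::real) \<ge> 0 \<Longrightarrow> s \<ge> 0 \<Longrightarrow> sqrt (d^2 + s^2) \<le> d + s"
  by (rule real_le_lsqrt) (auto simp: power2_eq_square algebra_simps)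

lemma A2: "(d::real) \<ge> 0 \<Longrightarrow> e \<ge> 0 \<Longrightarrow> d \<le> sqrt (d^2 + e)"
  by (rule real_le_rsqrt) simp

lemma A3: "(s::real) > 0 \<Longrightarrow> s^2 = q + e \<Longrightarrow> (- b / s^3) * q + (b / s - 2*K) = b*e/s^3 - 2*K"
proof -
  assume s: "s > 0" and h: "s^2 = q + e"
  have "b / s = b * s^2 / s^3" using s by (simp add: power2_eq_square power3_eq_cube)
  then have "b / s = b * (q + e) / s^3" using h by simp
  then have "(- b / s^3) * q + (b / s - 2*K) = (- b * q + b * (q+e)) / s^3 - 2*K"
    by (simp add: add_divide_distrib diff_divide_distrib)
  then show ?thesis by (simp add: algebra_simps)
qed

lemma third: "(y::real) = x + 3 * ((y - x)/3)" by (simp add: field_simps)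

lemma qdist: "(x-z)\<bullet>(x-z) = (dist x z)^2" for x z :: "'a::real_inner"
  by (simp add: dist_norm power2_norm_eq_inner)

definition subF :: "'a::euclidean_space set \<Rightarrow> ('a \<Rightarrow> real) \<Rightarrow> real \<Rightarrow> bool" where
  "subF U u M \<longleftrightarrow> (\<forall>a b k e z p. e > 0 \<longrightarrow> (p = z \<or> cf b k e z p \<noteq> 0) \<longrightarrow>
      local_max_on U (\<lambda>x. u x - fam a b k e z x) p \<longrightarrow>
      df b e z p * ((p-z)\<bullet>(p-z)) + cf b k e z p \<ge> -M)"

lemma touch:
  assumes "x1 \<in> U" "e' > 0" "\<forall>x\<in>U. dist x x1 < e' \<longrightarrow> x \<in> C" "\<forall>x\<in>C. f x \<le> f x1"
  shows "local_max_on U f x1"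
  unfolding local_max_on_def using assms by blast

lemma fam_val: "fam a b k e z x = a + b * sqrt ((dist x z)^2 + e) - k * (dist x z)^2"
  by (simp add: fam_def qdist)

lemma cone:
  fixes u :: "'a::euclidean_space \<Rightarrow> real"
  assumes U: "open U" and cu: "continuous_on U u" and sub: "subF U u M"
    and K: "2*K > M" "K > 0"
    and ball: "cball z \<rho> \<subseteq> U" and rho: "\<rho> > 0" and b: "b > 2*K*\<rho>"
    and sph: "\<forall>x\<in>sphere z \<rho>. u x \<le> u z + b*\<rho> - K*\<rho>^2"
    and x0: "x0 \<in> cball z \<rho>"
  shows "u x0 \<le> u z + b * dist x0 z - K * (dist x0 z)^2"
proof (rule ccontr)
  assume neg: "\<not> ?thesis"
  define d where "d = dist x0 z"
  define \<theta> where "\<theta> = (u x0 - (u z + b*d - K*d^2)) / 3"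
  have th: "\<theta> > 0" using neg by (simp add: \<theta>_def d_def)
  have ux0: "u x0 = u z + b*d - K*d^2 + 3*\<theta>" unfolding \<theta>_def by (rule third)
  have "d \<noteq> 0" using th ux0 by (auto simp: d_def)
  then have d0: "d > 0" by (simp add: d_def)
  have "d \<noteq> \<rho>"
  proof
    assume dr: "d = \<rho>"
    then have "x0 \<in> sphere z \<rho>" by (simp add: d_def dist_commute)
    then have "u x0 \<le> u z + b*\<rho> - K*\<rho>^2" using sph by blast
    then show False using ux0 th dr by simp
  qed
  then have d\<rho>: "d < \<rho>" using x0 by (simp add: d_def dist_commute)
  have zU: "z \<in> U" using ball rho by auto
  obtain \<delta>' where \<delta>': "\<delta>' > 0" "\<forall>x\<in>U. dist x z < \<delta>' \<longrightarrow> dist (u x) (u z) < \<theta>"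
    using cu zU th unfolding continuous_on_iff by blast
  define \<delta> where "\<delta> = min (\<delta>'/2) (d/2)"
  have \<delta>0: "\<delta> > 0" and \<delta>d: "\<delta> < d" and \<delta>\<delta>': "\<delta> < \<delta>'" using \<delta>' d0 by (auto simp: \<delta>_def)
  have b0: "b > 0" using b K rho by (smt (verit) mult_pos_pos)
  define \<sigma> where "\<sigma> = min (min 1 ((b - 2*K*\<rho>)/(4*K))) (min (\<theta>/(2*b)) ((2*K - M)*\<delta>^3/(2*b)))"
  have \<sigma>0: "\<sigma> > 0" using b K th b0 \<delta>0 by (auto simp: \<sigma>_def)
  have \<sigma>1: "\<sigma> \<le> 1" by (simp add: \<sigma>_def)
  have \<sigma>2: "\<sigma> \<le> (b - 2*K*\<rho>)/(4*K)" by (simp add: \<sigma>_def)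
  have \<sigma>3: "b * \<sigma> \<le> \<theta>/2"
  proof -
    have "\<sigma> \<le> \<theta>/(2*b)" by (simp add: \<sigma>_def)
    then show ?thesis using b0 by (simp add: field_simps)
  qed
  have \<sigma>4: "b * \<sigma> \<le> (2*K - M)*\<delta>^3/2"
  proof -
    have "\<sigma> \<le> (2*K - M)*\<delta>^3/(2*b)" by (simp add: \<sigma>_def)
    then show ?thesis using b0 by (simp add: field_simps)
  qed
  define e where "e = \<sigma>^2"
  have e0: "e > 0" using \<sigma>0 by (simp add: e_def)
  define a where "a = u z + \<theta>"
  define f where "f = (\<lambda>x. u x - fam a b K e z x)"
  define C where "C = cball z \<rho> - ball z \<delta>"
  have CU: "C \<subseteq> U" using ball by (auto simp: C_def)
  have cC: "compact C" unfolding C_def by (intro compact_diff compact_cball open_ball)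
  have x0C: "x0 \<in> C" using x0 \<delta>d by (auto simp: C_def d_def dist_commute)
  have contf: "continuous_on C f" unfolding f_def
  proof (intro continuous_on_diff)
    show "continuous_on C u" using cu CU continuous_on_subset by blast
    show "continuous_on C (fam a b K e z)"
      using Ck2_fam[OF e0, of C a b K z] by (simp add: numeral_2_eq_2 differentiable_imp_continuous_on)
  qed
  obtain x1 where x1C: "x1 \<in> C" and x1max: "\<forall>y\<in>C. f y \<le> f x1"
    using continuous_attains_sup[OF cC _ contf] x0C by blast
  have fx0: "f x0 > 0"
  proof -
    have "sqrt (d^2 + e) \<le> d + \<sigma>" unfolding e_def using A1 d0 \<sigma>0 by simp
    then have "b * sqrt (d^2 + e) \<le> b * d + b * \<sigma>" using b0
      by (metis distrib_left mult_le_cancel_left_pos)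
    then have "fam a b K e z x0 \<le> a + b*d + \<theta>/2 - K*d^2"
      using \<sigma>3 by (simp add: fam_val d_def[symmetric])
    then show ?thesis using ux0 th by (simp add: f_def a_def)
  qed
  define d1 where "d1 = dist x1 z"
  have fx1: "f x1 > 0" using fx0 x1max x0C by fastforce
  have d1ge: "\<delta> \<le> d1" and d1le: "d1 \<le> \<rho>" using x1C by (auto simp: C_def d1_def dist_commute)
  have "d1 \<noteq> \<rho>"
  proof
    assume h: "d1 = \<rho>"
    then have "u x1 \<le> u z + b*\<rho> - K*\<rho>^2" using sph by (simp add: d1_def dist_commute)
    moreover have "\<rho> \<le> sqrt (\<rho>^2 + e)" using A2 rho e0 by simp
    then have "b*\<rho> \<le> b * sqrt (\<rho>^2 + e)" using b0 by simp
    ultimately have "f x1 \<le> 0" using th h by (simp add: f_def fam_val d1_def[symmetric] a_def)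
    then show False using fx1 by simp
  qed
  then have d1\<rho>: "d1 < \<rho>" using d1le by simp
  have "d1 \<noteq> \<delta>"
  proof
    assume h: "d1 = \<delta>"
    have x1U: "x1 \<in> U" using x1C CU by blast
    have "dist (u x1) (u z) < \<theta>" using \<delta>' x1U h \<delta>\<delta>' by (simp add: d1_def)
    then have "u x1 < a" by (simp add: a_def dist_real_def)
    moreover have "\<delta> \<le> sqrt (\<delta>^2 + e)" using A2 \<delta>0 e0 by simp
    then have "b*\<delta> \<le> b * sqrt (\<delta>^2 + e)" using b0 by simp
    moreover have "K*\<delta>^2 \<le> b*\<delta>"
    proof -
      have "K*\<delta> \<le> K*\<rho>" using K \<delta>d d\<rho> by (simp add: mult_left_mono)
      moreover have "K*\<rho> \<le> 2*K*\<rho>" using K rho by simp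
      ultimately have "K*\<delta> \<le> b" using b by linarith
      then show ?thesis using \<delta>0 by (simp add: power2_eq_square mult.assoc[symmetric] mult_right_mono)
    qed
    ultimately have "f x1 < 0" by (simp add: f_def fam_val d1_def[symmetric] h)
    then show False using fx1 by simp
  qed
  then have d1\<delta>: "\<delta> < d1" using d1ge by simp
  have x1U: "x1 \<in> U" using x1C CU by blast
  have lm: "local_max_on U f x1"
  proof (rule touch[OF x1U, of "min (d1 - \<delta>) (\<rho> - d1)" C])
    show "min (d1 - \<delta>) (\<rho> - d1) > 0" using d1\<delta> d1\<rho> by simp
    show "\<forall>x\<in>U. dist x x1 < min (d1 - \<delta>) (\<rho> - d1) \<longrightarrow> x \<in> C"
    proof (intro ballI impI)
      fix x assume "dist x x1 < min (d1 - \<delta>) (\<rho> - d1)"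
      moreover have "dist x z \<le> dist x x1 + d1" "d1 \<le> dist x x1 + dist x z"
        using dist_triangle[of x z x1] dist_triangle[of x1 z x] by (auto simp: d1_def dist_commute)
      ultimately show "x \<in> C" by (auto simp: C_def dist_commute)
    qed
    show "\<forall>x\<in>C. f x \<le> f x1" using x1max by blast
  qed
  define s where "s = sqrt (d1^2 + e)"
  have s0: "s > 0" using e0 by (simp add: s_def add_nonneg_pos)
  have s2: "s^2 = d1^2 + e" using e0 by (simp add: s_def)
  have sd: "d1 \<le> s" using A2 e0 d1\<delta> \<delta>0 by (simp add: s_def)
  have sup: "s \<le> \<rho> + \<sigma>"
  proof -
    have "s \<le> sqrt (\<rho>^2 + \<sigma>^2)" unfolding s_def e_def using d1le d1\<delta> \<delta>0
      by (simp add: power_mono)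
    also have "\<dots> \<le> \<rho> + \<sigma>" using A1 rho \<sigma>0 by simp
    finally show ?thesis .
  qed
  have "2*K * s < b"
  proof -
    have "2*K * s \<le> 2*K*(\<rho> + \<sigma>)" using sup K by simp
    also have "\<dots> \<le> 2*K*\<rho> + (b - 2*K*\<rho>)/2" using \<sigma>2 K by (simp add: field_simps)
    also have "\<dots> < b" using b by (simp add: field_simps)
    finally show ?thesis .
  qed
  then have "2*K < b / s" using s0 by (simp add: pos_less_divide_eq)
  moreover have "cf b K e z x1 = b / s - 2*K" by (simp add: cf_def qdist d1_def s_def)
  ultimately have cfpos: "cf b K e z x1 > 0" by simp
  have val: "df b e z x1 * ((x1-z)\<bullet>(x1-z)) + cf b K e z x1 = b*e/s^3 - 2*K"
    unfolding df_def cf_def qdist d1_def[symmetric] s_def[symmetric]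
    using A3[OF s0 s2, of b K] by simp
  have "-M \<le> df b e z x1 * ((x1-z)\<bullet>(x1-z)) + cf b K e z x1"
    using sub[unfolded subF_def, rule_format, where a=a and b=b and k=K and e=e and z=z and p=x1] e0 cfpos lm unfolding f_def by simp
  then have "-M \<le> b*e/s^3 - 2*K" using val by simp
  moreover have "b*e/s^3 < (2*K - M)"
  proof -
    define P where "P = 2*K - M"
    have P0: "P > 0" using K by (simp add: P_def)
    have s3: "s^3 > 0" using s0 by simp
    have ds3: "\<delta>^3 < s^3" using d1\<delta> sd \<delta>0 by (simp add: power_strict_mono)
    have "b*e \<le> b*\<sigma>" using \<sigma>1 \<sigma>0 b0 by (simp add: e_def power2_eq_square mult_left_le)
    also have "\<dots> \<le> P*\<delta>^3/2" using \<sigma>4 by (simp add: P_def)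
    also have "\<dots> \<le> P*\<delta>^3" using P0 \<delta>0 by simp
    also have "\<dots> < P * s^3" using P0 ds3 by simp
    finally have "b*e < P * s^3" .
    then show ?thesis using s3 by (simp add: pos_divide_less_eq P_def)
  qed
  ultimately show False using K by linarith
qed



lemma lower:
  fixes u :: "'a::euclidean_space \<Rightarrow> real"
  assumes U: "open U" and cu: "continuous_on U u" and sub: "subF U u M"
    and K: "2*K > M" "K > 0"
    and ball: "cball z \<rho> \<subseteq> U" and rho: "\<rho> > 0"
  shows "\<exists>x\<in>sphere z \<rho>. u x \<ge> u z - K*\<rho>^2"
proof (rule ccontr)
  assume "\<not> ?thesis"
  then have sph: "\<forall>x\<in>sphere z \<rho>. u x < u z - K*\<rho>^2" by auto
  define f where "f = (\<lambda>x. u x - fam (u z) 0 K 1 z x)"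
  have fv: "f x = u x - u z + K * (dist x z)^2" for x by (simp add: f_def fam_val)
  have contf: "continuous_on (cball z \<rho>) f" unfolding f_def
  proof (intro continuous_on_diff)
    show "continuous_on (cball z \<rho>) u" using cu ball continuous_on_subset by blast
    show "continuous_on (cball z \<rho>) (fam (u z) 0 K 1 z)"
      using Ck2_fam[of 1 "cball z \<rho>" "u z" 0 K z] by (simp add: numeral_2_eq_2 differentiable_imp_continuous_on)
  qed
  have zc: "z \<in> cball z \<rho>" using rho by simp
  obtain x1 where x1C: "x1 \<in> cball z \<rho>" and x1max: "\<forall>y\<in>cball z \<rho>. f y \<le> f x1"
    using continuous_attains_sup[OF compact_cball _ contf] zc by blast
  have "f z = 0" using fv[of z] by simp
  then have fx1: "f x1 \<ge> 0" using x1max zc by metis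
  define d1 where "d1 = dist x1 z"
  have "d1 \<noteq> \<rho>"
  proof
    assume h: "d1 = \<rho>"
    then have "x1 \<in> sphere z \<rho>" by (simp add: d1_def dist_commute)
    then have "u x1 < u z - K*\<rho>^2" using sph by blast
    then have "f x1 < 0" using h fv[of x1] by (simp add: d1_def)
    then show False using fx1 by simp
  qed
  then have d1r: "d1 < \<rho>" using x1C by (simp add: d1_def dist_commute)
  have x1U: "x1 \<in> U" using x1C ball by blast
  have lm: "local_max_on U f x1"
  proof (rule touch[OF x1U, of "\<rho> - d1" "cball z \<rho>"])
    show "\<rho> - d1 > 0" using d1r by simp
    show "\<forall>x\<in>U. dist x x1 < \<rho> - d1 \<longrightarrow> x \<in> cball z \<rho>"
    proof (intro ballI impI)
      fix x assume "dist x x1 < \<rho> - d1"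
      moreover have "dist x z \<le> dist x x1 + d1"
        using dist_triangle[of x z x1] by (simp add: d1_def)
      ultimately show "x \<in> cball z \<rho>" by (simp add: dist_commute)
    qed
    show "\<forall>x\<in>cball z \<rho>. f x \<le> f x1" using x1max by blast
  qed
  have cfv: "cf 0 K 1 z x1 = - 2*K" by (simp add: cf_def)
  have dfv: "df 0 1 z x1 = 0" by (simp add: df_def)
  have "-M \<le> df 0 1 z x1 * ((x1-z)\<bullet>(x1-z)) + cf 0 K 1 z x1"
    using sub[unfolded subF_def, rule_format, where a="u z" and b=0 and k=K and e=1 and z=z and p=x1] cfv K lm
    unfolding f_def by simp
  then have "-M \<le> -2*K" using cfv dfv by simp
  then show False using K by simp
qed

lemma sup_sphere:
  fixes u :: "'a::euclidean_space \<Rightarrow> real"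
  assumes "continuous_on (sphere z r) u" "r \<ge> 0"
  shows "\<forall>x\<in>sphere z r. u x \<le> (SUP x\<in>sphere z r. u x)"
    and "\<exists>x\<in>sphere z r. u x = (SUP x\<in>sphere z r. u x)"
proof -
  have ne: "sphere z r \<noteq> {}" using assms(2) by simp
  obtain x1 where x1: "x1 \<in> sphere z r" "\<forall>y\<in>sphere z r. u y \<le> u x1"
    using continuous_attains_sup[OF compact_sphere ne assms(1)] by blast
  have bdd: "bdd_above (u ` sphere z r)" using x1 by (auto intro!: bdd_aboveI[of _ "u x1"])
  show 1: "\<forall>x\<in>sphere z r. u x \<le> (SUP x\<in>sphere z r. u x)"
    using cSUP_upper[OF _ bdd] by blast
  have "(SUP x\<in>sphere z r. u x) \<le> u x1" using cSUP_least[OF ne] x1 by blast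
  then show "\<exists>x\<in>sphere z r. u x = (SUP x\<in>sphere z r. u x)"
    using 1 x1 by (intro bexI[of _ x1]) (auto intro: order.antisym)
qed

lemma Splus_lower:
  fixes u :: "'a::euclidean_space \<Rightarrow> real"
  assumes U: "open U" and cu: "continuous_on U u" and sub: "subF U u M"
    and K: "2*K > M" "K > 0"
    and ball: "cball z r \<subseteq> U" and r: "r > 0"
  shows "S_plus u z r \<ge> - K * r"
proof -
  obtain x where x: "x \<in> sphere z r" "u x \<ge> u z - K*r^2"
    using lower[OF U cu sub K ball r] by blast
  have cs: "continuous_on (sphere z r) u" using cu ball sphere_cball continuous_on_subset by blast
  have "u x \<le> (SUP x\<in>sphere z r. u x)" using sup_sphere(1)[OF cs] r x by simp
  then have "- K * r * r \<le> (SUP x\<in>sphere z r. u x) - u z" using x by (simp add: power2_eq_square)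
  then show ?thesis using r by (simp add: S_plus_def pos_le_divide_eq)
qed

lemma Splus_mono:
  fixes u :: "'a::euclidean_space \<Rightarrow> real"
  assumes U: "open U" and cu: "continuous_on U u" and sub: "subF U u M"
    and K: "2*K > M" "K > 0"
    and ball: "cball z s \<subseteq> U" and r: "0 < r" "r < s"
  shows "S_plus u z r + K * r \<le> max (S_plus u z s + K * s) (2*K* s)"
proof (rule dense_ge)
  fix b assume bm: "max (S_plus u z s + K * s) (2*K* s) < b"
  have s: "s > 0" using r by simp
  have b1: "2*K* s < b" and b2: "S_plus u z s + K* s < b" using bm by auto
  have css: "continuous_on (sphere z s) u" using cu ball sphere_cball continuous_on_subset by blast
  have SS: "(SUP x\<in>sphere z s. u x) = u z + s * S_plus u z s" using s by (simp add: S_plus_def)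
  have sph: "\<forall>x\<in>sphere z s. u x \<le> u z + b* s - K* s^2"
  proof
    fix x assume x: "x \<in> sphere z s"
    have "u x \<le> u z + s * S_plus u z s" using sup_sphere(1)[OF css] s x SS by simp
    also have "s * S_plus u z s \<le> s * (b - K* s)" using b2 s by simp
    finally show "u x \<le> u z + b* s - K* s^2" by (simp add: algebra_simps power2_eq_square)
  qed
  have cone_r: "u x \<le> u z + b*r - K*r^2" if x: "x \<in> sphere z r" for x
  proof -
    have "x \<in> cball z s" using x r by simp
    then have "u x \<le> u z + b * dist x z - K * (dist x z)^2"
      by (rule cone[OF U cu sub K ball s b1 sph])
    then show ?thesis using x by (simp add: dist_commute)
  qed
  have ne: "sphere z r \<noteq> {}" using r by simp
  have "(SUP x\<in>sphere z r. u x) \<le> u z + b*r - K*r^2" using cSUP_least[OF ne] cone_r by blast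
  then have "(SUP x\<in>sphere z r. u x) - u z \<le> (b - K*r) * r" by (simp add: algebra_simps power2_eq_square)
  then have "S_plus u z r \<le> b - K*r" using r by (simp add: S_plus_def pos_divide_le_eq)
  then show "S_plus u z r + K * r \<le> b" by simp
qed



lemma limit_ex:
  fixes h :: "real \<Rightarrow> real"
  assumes R: "R > 0" and K: "K > 0"
    and pos: "\<And>r. 0 < r \<Longrightarrow> r \<le> R \<Longrightarrow> h r \<ge> 0"
    and mono: "\<And>r s. 0 < r \<Longrightarrow> r < s \<Longrightarrow> s \<le> R \<Longrightarrow> h r \<le> max (h s) (2*K* s)"
  shows "\<exists>L. (h \<longlongrightarrow> L) (at_right 0)"
proof -
  define g where "g s = max (h s) (2*K* s)" for s
  define A where "A = g ` {0<..R}"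
  define L where "L = Inf A"
  have Ane: "A \<noteq> {}" using R by (auto simp: A_def)
  have gpos: "g s \<ge> 0" if "0 < s" "s \<le> R" for s using pos[OF that] by (simp add: g_def)
  have bdd: "bdd_below A" unfolding A_def using gpos by (auto intro!: bdd_belowI[of _ 0])
  have Lle: "L \<le> g s" if "0 < s" "s \<le> R" for s
    unfolding L_def A_def using that bdd by (intro cInf_lower) (auto simp: A_def)
  have "(h \<longlongrightarrow> L) (at_right 0)"
  proof (rule tendstoI)
    fix \<epsilon> :: real assume e: "\<epsilon> > 0"
    have "Inf A < L + \<epsilon>" using e by (simp add: L_def)
    then obtain y where "y \<in> A" "y < L + \<epsilon>" using cInf_lessD[OF Ane] by blast
    then obtain s0 where s0: "0 < s0" "s0 \<le> R" "g s0 < L + \<epsilon>" by (auto simp: A_def)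
    define bnd where "bnd = min s0 (\<epsilon> / (2*K))"
    have bnd: "bnd > 0" using s0 e K by (simp add: bnd_def)
    have "\<forall>r>0. r < bnd \<longrightarrow> dist (h r) L < \<epsilon>"
    proof (intro allI impI)
      fix r :: real assume r: "0 < r" "r < bnd"
      have rs0: "r < s0" using r by (simp add: bnd_def)
      have rR: "r \<le> R" using rs0 s0 by simp
      have up: "h r < L + \<epsilon>" using mono[OF r(1) rs0 s0(2)] s0(3) by (simp add: g_def max_def split: if_splits)
      have "2*K*r < \<epsilon>"
      proof -
        have "r < \<epsilon> / (2*K)" using r by (simp add: bnd_def)
        then show ?thesis using K by (simp add: pos_less_divide_eq mult.commute)
      qed
      moreover have "L \<le> max (h r) (2*K*r)" using Lle[OF r(1) rR] by (simp add: g_def)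
      moreover have "h r \<ge> 0" using pos[OF r(1) rR] .
      ultimately have lo: "h r > L - \<epsilon>" using e by (simp add: max_def split: if_splits)
      show "dist (h r) L < \<epsilon>" using up lo by (simp add: dist_real_def abs_less_iff)
    qed
    then show "\<forall>\<^sub>F r in at_right 0. dist (h r) L < \<epsilon>"
      unfolding eventually_at_right_field using bnd by (intro exI[of _ bnd]) auto
  qed
  then show ?thesis by blast
qed




lemma ev_lin: "(c::real) \<ge> 0 \<Longrightarrow> d > 0 \<Longrightarrow> eventually (\<lambda>r. c * r < d) (at_right 0)"
proof -
  assume c: "c \<ge> 0" and d: "d > 0"
  have lim: "((\<lambda>r. c * r) \<longlongrightarrow> c * 0) (at_right (0::real))" by (intro tendsto_intros)
  show ?thesis using order_tendstoD(2)[OF lim, of d] d by simp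
qed

lemma ev_pos: "eventually (\<lambda>r::real. r > 0) (at_right 0)"
  by (simp add: eventually_at_right_less)

lemma Splus_lim:
  fixes u :: "'a::euclidean_space \<Rightarrow> real"
  assumes U: "open U" and cu: "continuous_on U u" and sub: "subF U u M"
    and K: "2*K > M" "K > 0" and y: "y \<in> U"
  shows "\<exists>A. (S_plus u y \<longlongrightarrow> A) (at_right 0)"
proof -
  obtain R where R: "R > 0" "cball y R \<subseteq> U" using open_contains_cball U y by blast
  define h where "h r = S_plus u y r + K * r" for r
  have pos: "h r \<ge> 0" if "0 < r" "r \<le> R" for r
  proof -
    have cb: "cball y r \<subseteq> U" using R(2) subset_cball[of r R y] that by blast
    show ?thesis using Splus_lower[OF U cu sub K cb that(1)] by (simp add: h_def)
  qed
  have mono: "h r \<le> max (h s) (2*K * s)" if "0 < r" "r < s" "s \<le> R" for r s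
  proof -
    have cb: "cball y s \<subseteq> U" using R(2) subset_cball[of s R y] that by blast
    show ?thesis using Splus_mono[OF U cu sub K cb that(1,2)] by (simp add: h_def)
  qed
  obtain L where L: "(h \<longlongrightarrow> L) (at_right 0)" using limit_ex[OF R(1) K(2) pos mono] by blast
  have "((\<lambda>r. h r - K * r) \<longlongrightarrow> L - K * 0) (at_right 0)" by (intro tendsto_intros L)
  then have "(S_plus u y \<longlongrightarrow> L) (at_right 0)" by (simp add: h_def)
  then show ?thesis by blast
qed

lemma Splus_lim_nonneg:
  fixes u :: "'a::euclidean_space \<Rightarrow> real"
  assumes U: "open U" and cu: "continuous_on U u" and sub: "subF U u M"
    and K: "2*K > M" "K > 0" and y: "y \<in> U" and A: "(S_plus u y \<longlongrightarrow> A) (at_right 0)"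
  shows "A \<ge> 0"
proof -
  obtain R where R: "R > 0" "cball y R \<subseteq> U" using open_contains_cball U y by blast
  have ev: "eventually (\<lambda>r. - K * r \<le> S_plus u y r) (at_right 0)"
    unfolding eventually_at_right_field
  proof (intro exI[of _ R] conjI allI impI)
    show "R > 0" by fact
    fix r :: real assume r: "0 < r" "r < R"
    have cb: "cball y r \<subseteq> U" using R(2) subset_cball[of r R y] r by auto
    show "- K * r \<le> S_plus u y r" using Splus_lower[OF U cu sub K cb r(1)] by simp
  qed
  have lim: "((\<lambda>r. - K * r) \<longlongrightarrow> - K * 0) (at_right (0::real))" by (intro tendsto_intros)
  have "- K * 0 \<le> A" by (rule tendsto_le[OF _ A lim ev]) simp
  then show ?thesis by simp
qed

lemma Sminus_eq: "S_minus u y r = - S_plus (\<lambda>x. - u x) y r"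
proof -
  have "(INF x\<in>sphere y r. u x) = - (SUP x\<in>sphere y r. - u x)"
    by (simp add: Inf_real_def image_image)
  then show ?thesis by (simp add: S_minus_def S_plus_def minus_divide_left)
qed

lemma BleA:
  fixes u :: "'a::euclidean_space \<Rightarrow> real"
  assumes U: "open U" and cu: "continuous_on U u" and sub: "subF U u M"
    and K: "2*K > M" "K > 0" and y: "y \<in> U"
    and A: "(S_plus u y \<longlongrightarrow> A) (at_right 0)"
    and B: "(S_plus (\<lambda>x. - u x) y \<longlongrightarrow> B) (at_right 0)"
  shows "B \<le> A"
proof (rule ccontr)
  assume "\<not> B \<le> A"
  then have AB: "A < B" by simp
  have A0: "A \<ge> 0" by (rule Splus_lim_nonneg[OF U cu sub K y A])
  define D where "D = B - A"
  have D0: "D > 0" using AB by (simp add: D_def)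
  define t where "t = (B + A) / D + 2"
  have t1: "t > 1"
  proof -
    have "(B + A) / D \<ge> 0" using A0 AB D0 by simp
    then show ?thesis by (simp add: t_def)
  qed
  have tD: "(t - 1) * D = 2 * B"
  proof -
    have "(t - 1) * D = ((B + A) / D) * D + D" by (simp add: t_def algebra_simps)
    also have "\<dots> = B + A + D" using D0 by simp
    finally show ?thesis by (simp add: D_def)
  qed
  define \<eta> where "\<eta> = D / (3*t + 3)"
  have \<eta>0: "\<eta> > 0" using D0 t1 by (simp add: \<eta>_def)
  have \<eta>D: "\<eta> * (3*t + 3) = D" using t1 by (simp add: \<eta>_def)
  have \<eta>lt: "\<eta> < D"
  proof -
    have "\<eta> * 1 < \<eta> * (3*t + 3)" using \<eta>0 t1 by (intro mult_strict_left_mono) auto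
    then show ?thesis using \<eta>D by simp
  qed
  have B\<eta>: "B - \<eta> > 0" using \<eta>lt A0 by (simp add: D_def)
  obtain R where R: "R > 0" "cball y R \<subseteq> U" using open_contains_cball U y by blast
  have E4: "eventually (\<lambda>r. S_plus u y ((t+1) * r) < A + \<eta>) (at_right 0)"
  proof -
    have "eventually (\<lambda>\<rho>. S_plus u y \<rho> < A + \<eta>) (at_right 0)"
      using order_tendstoD(2)[OF A, of "A + \<eta>"] \<eta>0 by simp
    then obtain b where b: "b > 0" "\<forall>\<rho>>0. \<rho> < b \<longrightarrow> S_plus u y \<rho> < A + \<eta>"
      unfolding eventually_at_right_field by auto
    show ?thesis unfolding eventually_at_right_field
    proof (intro exI[of _ "b / (t+1)"] conjI allI impI)
      show "b / (t+1) > 0" using b t1 by simp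
      fix r :: real assume r: "0 < r" "r < b / (t+1)"
      then have "(t+1) * r < b" using t1 by (simp add: pos_less_divide_eq mult.commute)
      moreover have "(t+1) * r > 0" using r t1 by simp
      ultimately show "S_plus u y ((t+1) * r) < A + \<eta>" using b by blast
    qed
  qed
  have E2: "eventually (\<lambda>r. B - \<eta> < S_plus (\<lambda>x. - u x) y r) (at_right 0)"
    using order_tendstoD(1)[OF B, of "B - \<eta>"] \<eta>0 by simp
  have E1: "eventually (\<lambda>r. (t+1) * r < R) (at_right 0)" using t1 R by (intro ev_lin) auto
  have E3: "eventually (\<lambda>r. (2*K*t) * r < B - \<eta>) (at_right 0)" using t1 K B\<eta> by (intro ev_lin) auto
  have E5: "eventually (\<lambda>r. (K*(t+1)) * r < \<eta>) (at_right 0)" using t1 K \<eta>0 by (intro ev_lin) auto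
  have E6: "eventually (\<lambda>r. (K*t*t) * r < \<eta>) (at_right 0)" using t1 K \<eta>0 by (intro ev_lin) auto
  have "eventually (\<lambda>r. r > 0 \<and> (t+1) * r < R \<and> B - \<eta> < S_plus (\<lambda>x. - u x) y r \<and>
      (2*K*t) * r < B - \<eta> \<and> S_plus u y ((t+1) * r) < A + \<eta> \<and> (K*(t+1)) * r < \<eta> \<and> (K*t*t) * r < \<eta>) (at_right 0)"
    using ev_pos E1 E2 E3 E4 E5 E6 by (intro eventually_conj)
  then obtain r where r: "r > 0" "(t+1) * r < R" "B - \<eta> < S_plus (\<lambda>x. - u x) y r"
      "(2*K*t) * r < B - \<eta>" "S_plus u y ((t+1) * r) < A + \<eta>" "(K*(t+1)) * r < \<eta>" "(K*t*t) * r < \<eta>"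
    using eventually_happens'[OF trivial_limit_at_right_real[of 0]] by blast
  define \<rho> where "\<rho> = (t+1)*r"
  have \<rho>0: "\<rho> > 0" using r(1) t1 by (simp add: \<rho>_def)
  have \<rho>R: "\<rho> \<le> R" using r(2) by (simp add: \<rho>_def)
  have cb\<rho>: "cball y \<rho> \<subseteq> U" using R(2) subset_cball[OF \<rho>R, of y] by blast
  have tr0: "t*r > 0" using r(1) t1 by simp
  have rtr: "r \<le> t*r" using r(1) t1 by simp
  have r\<rho>: "r \<le> \<rho>" using r(1) t1 by (simp add: \<rho>_def)
  have csr: "continuous_on (sphere y r) (\<lambda>x. - u x)"
  proof -
    have "sphere y r \<subseteq> U" using cb\<rho> subset_cball[OF r\<rho>, of y] sphere_cball by blast
    then show ?thesis using cu continuous_on_subset continuous_on_minus by blast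
  qed
  obtain z where z: "z \<in> sphere y r" "- u z = (SUP x\<in>sphere y r. - u x)"
    using sup_sphere(2)[OF csr] r(1) by auto
  define Br where "Br = S_plus (\<lambda>x. - u x) y r"
  have rBr: "r * Br = u y - u z"
    using r(1) unfolding Br_def S_plus_def z(2)[symmetric] by simp
  have Br1: "B - \<eta> < Br" using r(3) by (simp add: Br_def)
  have Br2: "2*K*(t*r) < Br" using r(4) Br1 by (simp add: mult.assoc)
  have dzy: "dist z y = r" using z(1) by (simp add: dist_commute)
  have cbz: "cball z (t*r) \<subseteq> U"
  proof -
    have "cball z (t*r) \<subseteq> cball y \<rho>"
    proof
      fix x assume "x \<in> cball z (t*r)"
      then have "dist z x \<le> t*r" by simp
      moreover have "dist y x \<le> dist y z + dist z x" by (rule dist_triangle)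
      ultimately show "x \<in> cball y \<rho>" using dzy by (simp add: \<rho>_def dist_commute algebra_simps)
    qed
    then show ?thesis using cb\<rho> by blast
  qed
  have "\<exists>w\<in>sphere z (t*r). u w \<ge> u z + t*r*Br - K*(t*r)^2"
  proof (rule ccontr)
    assume "\<not> ?thesis"
    then have sph: "\<forall>x\<in>sphere z (t*r). u x \<le> u z + Br*(t*r) - K*(t*r)^2"
      by (auto simp: algebra_simps)
    have yc: "y \<in> cball z (t*r)" using dzy rtr by (simp add: dist_commute)
    have "u y \<le> u z + Br * dist y z - K * (dist y z)^2"
      by (rule cone[OF U cu sub K cbz tr0 Br2 sph yc])
    then have "u y \<le> u z + Br * r - K * r^2" using dzy by (simp add: dist_commute)
    then have "u y \<le> u y - K * r^2" using rBr by (simp add: mult.commute)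
    moreover have "K * r^2 > 0" using K r(1) by simp
    ultimately show False by simp
  qed
  then obtain w where w: "w \<in> sphere z (t*r)" "u w \<ge> u z + t*r*Br - K*(t*r)^2" by blast
  have dwy: "dist w y \<le> \<rho>"
  proof -
    have "dist w y \<le> dist w z + dist z y" by (rule dist_triangle)
    then show ?thesis using w(1) dzy by (simp add: \<rho>_def dist_commute algebra_simps)
  qed
  define b' where "b' = A + 2*\<eta>"
  have K\<rho>: "K*\<rho> < \<eta>" using r(6) by (simp add: \<rho>_def mult.assoc)
  have b'1: "b' > 2*K*\<rho>" using K\<rho> A0 by (simp add: b'_def)
  have csy: "continuous_on (sphere y \<rho>) u" using cu cb\<rho> sphere_cball continuous_on_subset by blast
  have Sy: "S_plus u y \<rho> < A + \<eta>" using r(5) by (simp add: \<rho>_def)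
  have sphy: "\<forall>x\<in>sphere y \<rho>. u x \<le> u y + b'*\<rho> - K*\<rho>^2"
  proof
    fix x assume x: "x \<in> sphere y \<rho>"
    have "u x \<le> (SUP x\<in>sphere y \<rho>. u x)" using sup_sphere(1)[OF csy] \<rho>0 x by simp
    also have "\<dots> = u y + \<rho> * S_plus u y \<rho>" using \<rho>0 by (simp add: S_plus_def)
    also have "\<rho> * S_plus u y \<rho> \<le> \<rho> * (A + \<eta>)" using Sy \<rho>0 by simp
    also have "\<rho> * (A + \<eta>) \<le> \<rho> * (b' - K*\<rho>)" using K\<rho> \<rho>0 by (simp add: b'_def)
    finally show "u x \<le> u y + b'*\<rho> - K*\<rho>^2" by (simp add: algebra_simps power2_eq_square)
  qed
  have wc: "w \<in> cball y \<rho>" using dwy by (simp add: dist_commute)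
  have "u w \<le> u y + b' * dist w y - K * (dist w y)^2"
    by (rule cone[OF U cu sub K cb\<rho> \<rho>0 b'1 sphy wc])
  moreover have "b' * dist w y \<le> b' * \<rho>" using dwy A0 \<eta>0 by (simp add: b'_def)
  moreover have "K * (dist w y)^2 \<ge> 0" using K by simp
  ultimately have uw: "u w \<le> u y + b' * \<rho>" by linarith
  have "u z + t*r*Br - K*(t*r)^2 \<le> u y + b' * \<rho>" using w(2) uw by linarith
  then have "r * ((t - 1) * Br - K*t*t*r) \<le> r * (b' * (t+1))"
    using rBr by (simp add: algebra_simps power2_eq_square \<rho>_def)
  then have main: "(t - 1) * Br - K*t*t*r \<le> b' * (t+1)" using r(1) by simp
  have "(t - 1) * (B - \<eta>) < (t - 1) * Br" using Br1 t1 by simp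
  then have ineq: "(t - 1) * (B - \<eta>) - \<eta> < (A + 2*\<eta>) * (t+1)"
    using main r(7) by (simp add: b'_def)
  have e1: "t*B - t*A - B + A = 2*B" using tD by (simp add: D_def algebra_simps)
  have e2: "3*(t*\<eta>) + 3*\<eta> = B - A" using \<eta>D by (simp add: D_def algebra_simps)
  have e3: "t*B - B - t*\<eta> < t*A + A + 2*(t*\<eta>) + 2*\<eta>" using ineq by (simp add: algebra_simps)
  show False using e1 e2 e3 \<eta>0 D0 unfolding D_def by linarith
qed



lemma fam_neg: "fam (-a) (-b) (-k) e z x = - fam a b k e z x"
  by (simp add: fam_def)

lemma cf_neg: "cf (-b) (-k) e z x = - cf b k e z x"
  by (simp add: cf_def)

lemma df_neg: "df (-b) e z x = - df b e z x"
  by (simp add: df_def)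

lemma subcomp_subF:
  assumes V: "visc_sub_comp U u v" and M: "\<forall>x\<in>U. \<bar>u x - v x\<bar> \<le> M"
  shows "subF U u M"
  unfolding subF_def
proof (intro allI impI)
  fix a b k e z p assume e: "(e::real) > 0" and c: "p = z \<or> cf b k e z p \<noteq> 0"
    and lm: "local_max_on U (\<lambda>x. u x - fam a b k e z x) p"
  have pU: "p \<in> U" using lm by (simp add: local_max_on_def)
  have "- inf_lap_plus (fam a b k e z) p + u p - v p \<le> 0"
    using V Ck2_fam[OF e, of U a b k z] lm unfolding visc_sub_comp_def by blast
  moreover have "inf_lap_plus (fam a b k e z) p = df b e z p * ((p-z)\<bullet>(p-z)) + cf b k e z p"
    by (rule ilap_fam(1)[OF e c])
  moreover have "\<bar>u p - v p\<bar> \<le> M" using M pU by blast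
  ultimately show "df b e z p * ((p-z)\<bullet>(p-z)) + cf b k e z p \<ge> -M" by linarith
qed

lemma supercomp_subF:
  assumes V: "visc_super_comp U u v" and M: "\<forall>x\<in>U. \<bar>u x - v x\<bar> \<le> M"
  shows "subF U (\<lambda>x. - u x) M"
  unfolding subF_def
proof (intro allI impI)
  fix a b k e z p assume e: "(e::real) > 0" and c: "p = z \<or> cf b k e z p \<noteq> 0"
    and lm: "local_max_on U (\<lambda>x. - u x - fam a b k e z x) p"
  have pU: "p \<in> U" using lm by (simp add: local_max_on_def)
  have c': "p = z \<or> cf (-b) (-k) e z p \<noteq> 0" using c by (simp add: cf_neg)
  have lmin: "local_min_on U (\<lambda>x. u x - fam (-a) (-b) (-k) e z x) p"
    using lm unfolding local_max_on_def local_min_on_def fam_neg by (auto simp: algebra_simps)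
  have "- inf_lap_minus (fam (-a) (-b) (-k) e z) p + u p - v p \<ge> 0"
    using V Ck2_fam[OF e, of U "-a" "-b" "-k" z] lmin unfolding visc_super_comp_def by blast
  moreover have "inf_lap_minus (fam (-a) (-b) (-k) e z) p = df (-b) e z p * ((p-z)\<bullet>(p-z)) + cf (-b) (-k) e z p"
    by (rule ilap_fam(2)[OF e c'])
  moreover have "\<bar>u p - v p\<bar> \<le> M" using M pU by blast
  ultimately show "df b e z p * ((p-z)\<bullet>(p-z)) + cf b k e z p \<ge> -M"
    by (simp add: cf_neg df_neg)
qed

lemma per_u:
  fixes u :: "'a::euclidean_space \<Rightarrow> real"
  assumes U: "open U" and cu: "continuous_on U u" and sub: "subF U u M"
    and sub': "subF U (\<lambda>x. - u x) M"
    and K: "2*K > M" "K > 0" and y: "y \<in> U"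
  shows "\<exists>Sp Sm. (S_plus u y \<longlongrightarrow> Sp) (at_right 0) \<and> (S_minus u y \<longlongrightarrow> Sm) (at_right 0) \<and> Sp = - Sm"
proof -
  have cu': "continuous_on U (\<lambda>x. - u x)" using cu by (rule continuous_on_minus)
  obtain A where A: "(S_plus u y \<longlongrightarrow> A) (at_right 0)" using Splus_lim[OF U cu sub K y] by blast
  obtain B where B: "(S_plus (\<lambda>x. - u x) y \<longlongrightarrow> B) (at_right 0)" using Splus_lim[OF U cu' sub' K y] by blast
  have BA: "B \<le> A" by (rule BleA[OF U cu sub K y A B])
  have A': "(S_plus (\<lambda>x. - (- u x)) y \<longlongrightarrow> A) (at_right 0)" using A by simp
  have AB: "A \<le> B" by (rule BleA[OF U cu' sub' K y B A'])
  have "((\<lambda>r. - S_plus (\<lambda>x. - u x) y r) \<longlongrightarrow> - B) (at_right 0)" by (intro tendsto_minus B)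
  moreover have eq: "S_minus u y = (\<lambda>r. - S_plus (\<lambda>x. - u x) y r)" by (rule ext) (rule Sminus_eq)
  ultimately have Sm: "(S_minus u y \<longlongrightarrow> - B) (at_right 0)" by simp
  show ?thesis using A Sm BA AB by (intro exI[of _ A] exI[of _ "- B"]) simp
qed

theorem mainTheorem11:
  fixes U :: "'a::euclidean_space set" and u1 u2 :: "'a \<Rightarrow> real"
  assumes "open U" and "connected U" and "U \<noteq> {}" and "bounded U"
    and "smooth_boundary U"
    and "continuous_on (closure U) u1" and "continuous_on (closure U) u2"
    and "visc_solution U u1 u2"
  shows "\<forall>y\<in>U. \<forall>u\<in>{u1, u2}. \<exists>Sp Sm.
           ((\<lambda>r. S_plus u y r) \<longlongrightarrow> Sp) (at_right 0) \<and>
           ((\<lambda>r. S_minus u y r) \<longlongrightarrow> Sm) (at_right 0) \<and>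
           Sp = - Sm"
proof -
  have U: "open U" by fact
  have cmp: "compact (closure U)" using assms(4) by (simp add: compact_closure)
  have cd: "continuous_on (closure U) (\<lambda>x. u1 x - u2 x)"
    using assms(6,7) by (rule continuous_on_diff)
  have "bounded ((\<lambda>x. u1 x - u2 x) ` closure U)"
    by (rule compact_imp_bounded[OF compact_continuous_image[OF cd cmp]])
  then obtain M0 where M0: "\<forall>x\<in>closure U. \<bar>u1 x - u2 x\<bar> \<le> M0"
    unfolding bounded_real by auto
  define M where "M = max M0 0"
  have M: "\<forall>x\<in>U. \<bar>u1 x - u2 x\<bar> \<le> M" using M0 closure_subset by (force simp: M_def)
  have M': "\<forall>x\<in>U. \<bar>u2 x - u1 x\<bar> \<le> M" using M by (simp add: abs_minus_commute)
  have M00: "M \<ge> 0" by (simp add: M_def)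
  define K where "K = M + 1"
  have K: "2*K > M" "K > 0" using M00 by (simp_all add: K_def)
  have c1: "continuous_on U u1" using assms(6) closure_subset continuous_on_subset by blast
  have c2: "continuous_on U u2" using assms(7) closure_subset continuous_on_subset by blast
  have vs: "visc_sub_comp U u1 u2" "visc_sub_comp U u2 u1" "visc_super_comp U u1 u2" "visc_super_comp U u2 u1"
    using assms(8) unfolding visc_solution_def visc_subsolution_def visc_supersolution_def by auto
  show ?thesis
  proof (intro ballI)
    fix y u assume y: "y \<in> U" and u: "u \<in> {u1, u2}"
    show "\<exists>Sp Sm. ((\<lambda>r. S_plus u y r) \<longlongrightarrow> Sp) (at_right 0) \<and>
           ((\<lambda>r. S_minus u y r) \<longlongrightarrow> Sm) (at_right 0) \<and> Sp = - Sm"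
    proof (cases "u = u1")
      case True
      show ?thesis using per_u[OF U c1 subcomp_subF[OF vs(1) M] supercomp_subF[OF vs(3) M] K y] True by simp
    next
      case False
      then have "u = u2" using u by simp
      then show ?thesis using per_u[OF U c2 subcomp_subF[OF vs(2) M'] supercomp_subF[OF vs(4) M'] K y] by simp
    qed
  qed
qed


end
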